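(* Let $(\mu_{+},\sigma_{+})\in\mathbb{K}[[\mathtt{x}]]^{+}\times\mathfrak{M}^{+}$ and define $\phi_{(\mu_{+},\sigma_{+})}:\mathbb{K}[[\mathtt{x}]]\to\mathbb{K}[[\mathtt{x}]]\times\mathfrak{M}$ by $\phi_{(\mu_{+},\sigma_{+})}(f):=\sum_{n\ge0}f_n(\mu_{+},\sigma_{+})^{\rtimes n}$ for $f=\sum_{n\ge0}f_n\mathtt{x}^n$ (the series converges). Then $\phi_{(\mu_{+},\sigma_{+})}$ is $\mathbb{K}$-linear and maps $\mathtt{x}$ to $(\mu_{+},\sigma_{+})$. Moreover, if $f\in\mathfrak{M}$ then $\phi_{(\mu_{+},\sigma_{+})}(f)\in\mathbb{K}[[\mathtt{x}]]^{+}\times\mathfrak{M}^{+}$, and if $\langle f,1\rangle=1$ then $\phi_{(\mu_{+},\sigma_{+})}(f)\in\mathsf{UM}\rtimes\mathsf{US}$.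
   Context: $\mathbb{K}$ is a field of characteristic zero (discrete topology); $\mathbb{K}[[\mathtt{x}]]$ has the $(\mathtt{x})$-adic topology given by the order valuation $\nu$ ($\nu(0)=+\infty$); $\langle f,1\rangle$ is the constant term of $f$. $\mathfrak{M}:=\mathtt{x}\mathbb{K}[[\mathtt{x}]]$; $\mathbb{K}[[\mathtt{x}]]\times\mathfrak{M}$ has the product topology and componentwise vector space structure. $\mathbb{K}[[\mathtt{x}]]^{+}:=\mathfrak{M}$, $\mathfrak{M}^{+}:=\{\sigma\in\mathfrak{M}:\nu(\sigma)>1\}$. For $g=\sum g_n\mathtt{x}^n$ and $\sigma\in\mathfrak{M}$, $g\circ\sigma:=\sum g_n\sigma^n$. Product: $(\mu_1,\sigma_1)\rtimes(\mu_2,\sigma_2):=((\mu_1\circ\sigma_2)\mu_2,\sigma_1\circ\sigma_2)$; $(\mu,\sigma)^{\rtimes0}:=(1,\mathtt{x})$, $(\mu,\sigma)^{\rtimes n}$ the $n$-fold product. $\mathsf{UM}:=\{1+\mu_{+}:\mu_{+}\in\mathbb{K}[[\mathtt{x}]]^{+}\}$, $\mathsf{US}:=\{\mathtt{x}+\sigma_{+}:\sigma_{+}\in\mathfrak{M}^{+}\}$, and $\mathsf{UM}\rtimes\mathsf{US}$ (the Riordan group) is the set of pairs $(\mu,\sigma)$ with $\mu\in\mathsf{UM}$, $\sigma\in\mathsf{US}$. *)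

theory Defs
  imports "HOL-Computational_Algebra.Formal_Power_Series" "HOL-Library.Product_Plus"
begin

(* K[[x]] is 'a fps with 'a :: field_char_0; its topology is the library's
   (x)-adic metric (dist_fps_def); pairs carry the product topology. *)

definition fpsM :: "'a::field_char_0 fps set" where
  "fpsM = {\<sigma>. \<sigma> = 0 \<or> subdegree \<sigma> \<ge> 1}"

definition fpsMplus :: "'a::field_char_0 fps set" where
  "fpsMplus = {\<sigma>. \<sigma> = 0 \<or> subdegree \<sigma> > 1}"

definition fpsPlus :: "'a::field_char_0 fps set" where
  "fpsPlus = fpsM"

definition UM :: "'a::field_char_0 fps set" where
  "UM = {1 + \<mu>p | \<mu>p. \<mu>p \<in> fpsPlus}"

definition US :: "'a::field_char_0 fps set" where
  "US = {fps_X + \<sigma>p | \<sigma>p. \<sigma>p \<in> fpsMplus}"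

definition rtimes :: "'a::field_char_0 fps \<times> 'a fps \<Rightarrow> 'a fps \<times> 'a fps \<Rightarrow> 'a fps \<times> 'a fps"
  (infixl \<open>\<rtimes>\<close> 70) where
  "rtimes p q = (((fst p) oo (snd q)) * fst q, (snd p) oo (snd q))"

primrec rt_pow :: "'a::field_char_0 fps \<times> 'a fps \<Rightarrow> nat \<Rightarrow> 'a fps \<times> 'a fps" where
  "rt_pow p 0 = (1, fps_X)"
| "rt_pow p (Suc n) = rt_pow p n \<rtimes> p"

definition pscale :: "'a::field_char_0 \<Rightarrow> 'a fps \<times> 'a fps \<Rightarrow> 'a fps \<times> 'a fps" where
  "pscale c p = (fps_const c * fst p, fps_const c * snd p)"

definition phi :: "'a::field_char_0 fps \<times> 'a fps \<Rightarrow> 'a fps \<Rightarrow> 'a fps \<times> 'a fps" where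
  "phi p f = (\<Sum>n. pscale (fps_nth f n) (rt_pow p n))"

end

theory Submission
  imports Defs
begin

unbundle fps_syntax

lemma fps_sums_lemma:
  fixes g :: "nat \<Rightarrow> 'a::field_char_0 fps"
  assumes "\<And>n k. k < n \<Longrightarrow> g n $ k = 0"
  shows "g sums Abs_fps (\<lambda>k. \<Sum>n\<le>k. g n $ k)"
  unfolding sums_def
proof (rule tendsto_fpsI)
  fix k
  show "eventually (\<lambda>N. (\<Sum>n<N. g n) $ k = Abs_fps (\<lambda>k. \<Sum>n\<le>k. g n $ k) $ k) sequentially"
    unfolding eventually_sequentially
  proof (intro exI allI impI)
    fix N assume "Suc k \<le> N"
    hence "(\<Sum>n<N. g n $ k) = (\<Sum>n\<le>k. g n $ k)"
      by (intro sum.mono_neutral_right) (auto intro: assms)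
    thus "(\<Sum>n<N. g n) $ k = Abs_fps (\<lambda>k. \<Sum>n\<le>k. g n $ k) $ k"
      by (simp add: fps_sum_nth)
  qed
qed

lemma sums_pair_lemma:
  assumes "a sums A" "b sums B"
  shows "(\<lambda>n. (a n, b n)) sums (A, B)"
proof -
  have "(\<lambda>N. (\<Sum>n<N. a n, \<Sum>n<N. b n)) \<longlonglongrightarrow> (A, B)"
    using assms unfolding sums_def by (intro tendsto_Pair)
  moreover have "\<And>N. (\<Sum>n<N. (a n, b n)) = (\<Sum>n<N. a n, \<Sum>n<N. b n)"
    by (simp add: prod_eq_iff fst_sum snd_sum)
  ultimately show ?thesis unfolding sums_def by simp
qed

lemma rt_pow_order:
  fixes \<mu> \<sigma> :: "'a::field_char_0 fps"
  assumes m0: "\<mu> $ 0 = 0" and s0: "\<sigma> $ 0 = 0" and s1: "\<sigma> $ 1 = 0"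
  shows "(\<forall>k<n. fst (rt_pow (\<mu>, \<sigma>) n) $ k = 0) \<and> (\<forall>k\<le>n. snd (rt_pow (\<mu>, \<sigma>) n) $ k = 0)"
proof (induction n)
  case 0
  then show ?case by simp
next
  case (Suc n)
  define a where "a = fst (rt_pow (\<mu>, \<sigma>) n)"
  define b where "b = snd (rt_pow (\<mu>, \<sigma>) n)"
  have ia: "\<And>k. k < n \<Longrightarrow> a $ k = 0" and ib: "\<And>k. k \<le> n \<Longrightarrow> b $ k = 0"
    using Suc unfolding a_def b_def by auto
  have eq: "rt_pow (\<mu>, \<sigma>) (Suc n) = ((a oo \<sigma>) * \<mu>, b oo \<sigma>)"
    by (simp add: rtimes_def a_def b_def)
  have pw: "(\<sigma> ^ Suc n) $ Suc n = 0"
  proof (cases "\<sigma> = 0")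
    case True then show ?thesis by simp
  next
    case False
    have "subdegree \<sigma> \<ge> 2"
      using False s0 s1 by (intro subdegree_geI) (auto simp: less_2_cases_iff)
    hence "Suc n * 2 \<le> Suc n * subdegree \<sigma>" by (rule mult_le_mono2)
    moreover have "Suc n < Suc n * 2" by simp
    ultimately have "Suc n < Suc n * subdegree \<sigma>" by linarith
    thus ?thesis by (rule fps_pow_nth_below_subdegree)
  qed
  have c1: "((a oo \<sigma>) * \<mu>) $ k = 0" if "k < Suc n" for k
    unfolding fps_mult_nth
  proof (intro sum.neutral ballI)
    fix i assume i: "i \<in> {0..k}"
    show "(a oo \<sigma>) $ i * \<mu> $ (k - i) = 0"
    proof (cases "i < n")
      case True
      have "(a oo \<sigma>) $ i = 0" unfolding fps_compose_nth
        using True by (intro sum.neutral) (auto intro: ia)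
      then show ?thesis by simp
    next
      case False
      then have "k - i = 0" using i that by auto
      then show ?thesis using m0 by simp
    qed
  qed
  have c2: "(b oo \<sigma>) $ k = 0" if "k \<le> Suc n" for k
    unfolding fps_compose_nth
  proof (intro sum.neutral ballI)
    fix i assume i: "i \<in> {0..k}"
    show "b $ i * (\<sigma> ^ i) $ k = 0"
    proof (cases "i \<le> n")
      case True then show ?thesis using ib by simp
    next
      case False
      then have "i = Suc n" "k = Suc n" using i that by auto
      then show ?thesis using pw by simp
    qed
  qed
  show ?case using c1 c2 eq by simp
qed

theorem mainTheorem10:
  fixes \<mu> \<sigma> :: "'a::field_char_0 fps"
  assumes "\<mu> \<in> fpsPlus" and "\<sigma> \<in> fpsMplus"
  shows "(\<forall>f. summable (\<lambda>n. pscale (fps_nth f n) (rt_pow (\<mu>, \<sigma>) n)))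
    \<and> (\<forall>f g. phi (\<mu>, \<sigma>) (f + g) = phi (\<mu>, \<sigma>) f + phi (\<mu>, \<sigma>) g)
    \<and> (\<forall>c f. phi (\<mu>, \<sigma>) (fps_const c * f) = pscale c (phi (\<mu>, \<sigma>) f))
    \<and> phi (\<mu>, \<sigma>) fps_X = (\<mu>, \<sigma>)
    \<and> (\<forall>f. f \<in> fpsM \<longrightarrow> phi (\<mu>, \<sigma>) f \<in> fpsPlus \<times> fpsMplus)
    \<and> (\<forall>f. fps_nth f 0 = 1 \<longrightarrow> phi (\<mu>, \<sigma>) f \<in> UM \<times> US)"
proof -
  have m0: "\<mu> $ 0 = 0" using assms(1) unfolding fpsPlus_def fpsM_def
    by (auto intro: nth_less_subdegree_zero)
  have s0: "\<sigma> $ 0 = 0" and s1: "\<sigma> $ 1 = 0" using assms(2) unfolding fpsMplus_def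
    by (auto intro: nth_less_subdegree_zero)
  define P where "P = rt_pow (\<mu>, \<sigma>)"
  have ordA: "\<And>n k. k < n \<Longrightarrow> fst (P n) $ k = 0"
    using rt_pow_order[OF m0 s0 s1] unfolding P_def by blast
  have ordB: "\<And>n k. k < n \<Longrightarrow> snd (P n) $ k = 0"
    using rt_pow_order[OF m0 s0 s1] unfolding P_def by auto
  define F where "F f = Abs_fps (\<lambda>k. \<Sum>n\<le>k. f $ n * fst (P n) $ k)" for f :: "'a fps"
  define G where "G f = Abs_fps (\<lambda>k. \<Sum>n\<le>k. f $ n * snd (P n) $ k)" for f :: "'a fps"
  have sm: "(\<lambda>n. pscale (f $ n) (P n)) sums (F f, G f)" for f
  proof -
    have "(\<lambda>n. fps_const (f $ n) * fst (P n)) sums F f"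
      using fps_sums_lemma[of "\<lambda>n. fps_const (f $ n) * fst (P n)"] ordA
      unfolding F_def by simp
    moreover have "(\<lambda>n. fps_const (f $ n) * snd (P n)) sums G f"
      using fps_sums_lemma[of "\<lambda>n. fps_const (f $ n) * snd (P n)"] ordB
      unfolding G_def by simp
    ultimately show ?thesis unfolding pscale_def by (rule sums_pair_lemma)
  qed
  have phiE: "phi (\<mu>, \<sigma>) f = (F f, G f)" for f
    unfolding phi_def using sm[of f] sums_unique unfolding P_def by metis
  have F0: "F f $ 0 = f $ 0 * fst (P 0) $ 0" "G f $ 0 = f $ 0 * snd (P 0) $ 0" for f
    unfolding F_def G_def by simp_all
  have G1: "G f $ 1 = f $ 0 + f $ 1 * \<sigma> $ 1" for f
  proof -
    have "G f $ 1 = (\<Sum>n\<le>1. f $ n * snd (P n) $ 1)" unfolding G_def by simp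
    also have "\<dots> = f $ 0 + f $ 1 * \<sigma> $ 1"
      using s0 by (simp add: P_def rtimes_def)
    finally show ?thesis .
  qed
  have P0: "P 0 = (1, fps_X)" unfolding P_def by simp
  have P1: "P (Suc 0) = (\<mu>, \<sigma>)" unfolding P_def using s0 by (simp add: rtimes_def)
  have M_I: "h \<in> fpsM" if "h $ 0 = 0" for h :: "'a fps"
    unfolding fpsM_def using that
    by (cases "h = 0") (auto intro!: subdegree_geI)
  have Mp_I: "h \<in> fpsMplus" if "h $ 0 = 0" "h $ 1 = 0" for h :: "'a fps"
  proof (cases "h = 0")
    case False
    have "subdegree h \<ge> 2" using False that
      by (intro subdegree_geI) (auto simp: less_2_cases_iff)
    then show ?thesis unfolding fpsMplus_def by simp
  qed (simp add: fpsMplus_def)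
  have r1: "\<forall>f. summable (\<lambda>n. pscale (fps_nth f n) (rt_pow (\<mu>, \<sigma>) n))"
    using sm unfolding P_def sums_iff by blast
  have r2: "\<forall>f g. phi (\<mu>, \<sigma>) (f + g) = phi (\<mu>, \<sigma>) f + phi (\<mu>, \<sigma>) g"
    by (auto simp: phiE F_def G_def fps_eq_iff distrib_right sum.distrib)
  have r3: "\<forall>c f. phi (\<mu>, \<sigma>) (fps_const c * f) = pscale c (phi (\<mu>, \<sigma>) f)"
    by (auto simp: phiE F_def G_def pscale_def fps_eq_iff sum_distrib_left mult.assoc)
  have r4: "phi (\<mu>, \<sigma>) fps_X = (\<mu>, \<sigma>)"
  proof -
    have "F fps_X = \<mu>"
    proof (rule fps_ext)
      fix k
      show "F fps_X $ k = \<mu> $ k"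
      proof (cases k)
        case 0 then show ?thesis using m0 by (simp add: F_def)
      next
        case (Suc j)
        have "(\<Sum>n\<le>k. fps_X $ n * fst (P n) $ k) = fps_X $ 1 * fst (P 1) $ k"
          by (rule sum.remove[where x=1, THEN trans]) (auto simp: Suc intro!: sum.neutral)
        then show ?thesis by (simp add: F_def P1)
      qed
    qed
    moreover have "G fps_X = \<sigma>"
    proof (rule fps_ext)
      fix k
      show "G fps_X $ k = \<sigma> $ k"
      proof (cases k)
        case 0 then show ?thesis using s0 by (simp add: G_def P0)
      next
        case (Suc j)
        have "(\<Sum>n\<le>k. fps_X $ n * snd (P n) $ k) = fps_X $ 1 * snd (P 1) $ k"
          by (rule sum.remove[where x=1, THEN trans]) (auto simp: Suc intro!: sum.neutral)
        then show ?thesis by (simp add: G_def P1)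
      qed
    qed
    ultimately show ?thesis by (simp add: phiE)
  qed
  have r5: "\<forall>f. f \<in> fpsM \<longrightarrow> phi (\<mu>, \<sigma>) f \<in> fpsPlus \<times> fpsMplus"
  proof (intro allI impI)
    fix f :: "'a fps" assume "f \<in> fpsM"
    hence f0: "f $ 0 = 0" unfolding fpsM_def by (auto intro: nth_less_subdegree_zero)
    show "phi (\<mu>, \<sigma>) f \<in> fpsPlus \<times> fpsMplus"
      unfolding phiE fpsPlus_def using f0 s1 F0 G1
      by (auto intro!: M_I Mp_I)
  qed
  have r6: "\<forall>f. fps_nth f 0 = 1 \<longrightarrow> phi (\<mu>, \<sigma>) f \<in> UM \<times> US"
  proof (intro allI impI)
    fix f :: "'a fps" assume f0: "f $ 0 = 1"
    have "F f - 1 \<in> fpsPlus" unfolding fpsPlus_def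
      using f0 F0 P0 by (intro M_I) simp
    hence "F f \<in> UM" unfolding UM_def by (intro CollectI exI[of _ "F f - 1"]) simp
    moreover have "G f - fps_X \<in> fpsMplus"
      using f0 F0 P0 G1 s1 by (intro Mp_I) simp_all
    hence "G f \<in> US" unfolding US_def by (intro CollectI exI[of _ "G f - fps_X"]) simp
    ultimately show "phi (\<mu>, \<sigma>) f \<in> UM \<times> US" by (simp add: phiE)
  qed
  show ?thesis using r1 r2 r3 r4 r5 r6 by blast
qed

end
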